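(* For $\alpha=2$ and $\beta=3$ (so $\alpha>0$, $\beta>\alpha$), the Sharma-Mittal entropy $S_{2,3}(\mathbf{p})=\frac12\left(1-\left(\sum_i p_i^2\right)^2\right)$ is neither supermodular nor submodular on the majorization lattice $(\mathcal{P}_4,\preceq)$: there exist $\mathbf{p},\mathbf{q}\in\mathcal{P}_4$ with $S_{2,3}(\mathbf{p}\vee\mathbf{q})+S_{2,3}(\mathbf{p}\wedge\mathbf{q})<S_{2,3}(\mathbf{p})+S_{2,3}(\mathbf{q})$, and there exist $\mathbf{p}',\mathbf{q}'\in\mathcal{P}_4$ with $S_{2,3}(\mathbf{p}'\vee\mathbf{q}')+S_{2,3}(\mathbf{p}'\wedge\mathbf{q}')>S_{2,3}(\mathbf{p}')+S_{2,3}(\mathbf{q}')$.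
   Context: $\mathcal{P}_4$ is the set of probability vectors of length 4, taken with components in non-increasing order. Majorization: $\mathbf{p}\preceq\mathbf{q}$ iff $\sum_{i=1}^k p_i\le\sum_{i=1}^k q_i$ for $k=1,\dots,4$; this makes $\mathcal{P}_4$ a lattice. The greatest lower bound $\mathbf{p}\wedge\mathbf{q}=\mathbf{r}$ satisfies $\sum_{i=1}^k r_i=\min\{\sum_{i=1}^k p_i,\sum_{i=1}^k q_i\}$. The least upper bound $\mathbf{p}\vee\mathbf{q}$ is the least element majorizing both; concretely, let $\mathbf{w}$ satisfy $\sum_{i=1}^k w_i=\max\{\sum_{i=1}^k p_i,\sum_{i=1}^k q_i\}$; if $\mathbf{w}$ is non-increasing then $\mathbf{p}\vee\mathbf{q}=\mathbf{w}$, otherwise it is obtained by repeatedly replacing each maximal consecutive block of coordinates violating the non-increasing order by its average. A function $\phi$ is supermodular if $\phi(\mathbf{x})+\phi(\mathbf{y})\le\phi(\mathbf{x}\wedge\mathbf{y})+\phi(\mathbf{x}\vee\mathbf{y})$ for all $\mathbf{x},\mathbf{y}$, and submodular if the reverse inequality holds for all $\mathbf{x},\mathbf{y}$. The Sharma-Mittal entropy is $S_{\alpha,\beta}(\mathbf{p})=\frac{1}{1-\beta}\left[\left(\sum_{i} p_i^\alpha\right)^{\frac{1-\beta}{1-\alpha}}-1\right]$. *)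

theory Defs
  imports Complex_Main
begin

definition prob4 :: "real list \<Rightarrow> bool" where
  "prob4 p \<longleftrightarrow> length p = 4 \<and> (\<forall>x\<in>set p. 0 \<le> x) \<and> sum_list p = 1
      \<and> sorted_wrt (\<lambda>x y. x \<ge> y) p"

definition psum :: "real list \<Rightarrow> nat \<Rightarrow> real" where
  "psum p k = sum_list (take k p)"

definition majorized :: "real list \<Rightarrow> real list \<Rightarrow> bool" where
  "majorized p q \<longleftrightarrow> (\<forall>k\<in>{1..4}. psum p k \<le> psum q k)"

definition meet4 :: "real list \<Rightarrow> real list \<Rightarrow> real list" where
  "meet4 p q = map (\<lambda>k. min (psum p (Suc k)) (psum q (Suc k)) - min (psum p k) (psum q k)) [0..<4]"

definition join4 :: "real list \<Rightarrow> real list \<Rightarrow> real list" where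
  "join4 p q = (THE r. prob4 r \<and> majorized p r \<and> majorized q r \<and>
      (\<forall>s. prob4 s \<and> majorized p s \<and> majorized q s \<longrightarrow> majorized r s))"

definition sharma_mittal :: "real \<Rightarrow> real \<Rightarrow> real list \<Rightarrow> real" where
  "sharma_mittal \<alpha> \<beta> p =
     (1 / (1 - \<beta>)) * ((sum_list (map (\<lambda>x. x powr \<alpha>) p)) powr ((1 - \<beta>) / (1 - \<alpha>)) - 1)"

end

theory Submission
  imports Defs
begin

lemma len4: "length r = 4 \<Longrightarrow> \<exists>a b c d. r = [a,b,c,d]"
  by (cases r; simp; rename_tac l; case_tac l; simp; rename_tac l; case_tac l; simp; rename_tac l; case_tac l; simp)

lemma psum4: "psum [a,b,c,d] 1 = a" "psum [a,b,c,d] 2 = a+b" "psum [a,b,c,d] 3 = a+b+c"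
  "psum [a,b,c,d] 4 = a+b+c+d"
  by (simp_all add: psum_def numeral_eq_Suc)

lemma maj_iff: "majorized [a,b,c,d] [a',b',c',d'] \<longleftrightarrow>
   a \<le> a' \<and> a+b \<le> a'+b' \<and> a+b+c \<le> a'+b'+c' \<and> a+b+c+d \<le> a'+b'+c'+d'"
proof -
  have "{1..4::nat} = {1,2,3,4}" by auto
  thus ?thesis using psum4[simplified] by (simp add: majorized_def psum4 del: atLeastAtMost_iff)
qed

lemma k4: "k \<in> {1..4::nat} \<longleftrightarrow> k = 1 \<or> k = 2 \<or> k = 3 \<or> k = 4" by auto

lemma join_eq:
  assumes "prob4 p" "prob4 q" "prob4 w" "majorized p w" "majorized q w"
    and mx: "\<And>k. k \<in> {1..4} \<Longrightarrow> psum w k = max (psum p k) (psum q k)"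
  shows "join4 p q = w"
  unfolding join4_def
proof (rule the_equality)
  show "prob4 w \<and> majorized p w \<and> majorized q w \<and>
      (\<forall>s. prob4 s \<and> majorized p s \<and> majorized q s \<longrightarrow> majorized w s)"
    using assms by (auto simp: majorized_def)
next
  fix r assume r: "prob4 r \<and> majorized p r \<and> majorized q r \<and>
      (\<forall>s. prob4 s \<and> majorized p s \<and> majorized q s \<longrightarrow> majorized r s)"
  hence m1: "majorized r w" using assms by blast
  have m2: "majorized w r" using r mx by (auto simp: majorized_def)
  obtain a b c d where rr: "r = [a,b,c,d]" using r len4 unfolding prob4_def by blast
  obtain a' b' c' d' where ww: "w = [a',b',c',d']" using assms(3) len4 unfolding prob4_def by blast
  show "r = w" using m1 m2 unfolding rr ww maj_iff by auto
qed

lemma sm: assumes "0 \<le> a" "0 \<le> b" "0 \<le> c" "0 \<le> d" shows "sharma_mittal 2 3 [a,b,c,d] = (1 - (a^2+b^2+c^2+d^2)^2) / 2"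
proof -
  have "sum_list (map (\<lambda>x. x powr 2) [a,b,c,d]) = a^2+b^2+c^2+d^2"
    using assms by (simp add: powr_numeral)
  moreover have "(a^2+b^2+c^2+d^2) powr ((1 - 3) / (1 - 2)) = (a^2+b^2+c^2+d^2)^2"
    by (simp add: powr_numeral)
  ultimately show ?thesis unfolding sharma_mittal_def by (simp add: field_simps)
qed

lemma meet_eq: "meet4 [a,b,c,d] [a',b',c',d'] =
  [min a a', min (a+b) (a'+b') - min a a', min (a+b+c) (a'+b'+c') - min (a+b) (a'+b'),
   min (a+b+c+d) (a'+b'+c'+d') - min (a+b+c) (a'+b'+c')]"
  by (simp add: meet4_def psum_def numeral_eq_Suc upt_rec ac_simps)

theorem mainTheorem7:
  shows "(\<exists>p q. prob4 p \<and> prob4 q \<and>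
            sharma_mittal 2 3 (join4 p q) + sharma_mittal 2 3 (meet4 p q)
              < sharma_mittal 2 3 p + sharma_mittal 2 3 q)
       \<and> (\<exists>p' q'. prob4 p' \<and> prob4 q' \<and>
            sharma_mittal 2 3 (join4 p' q') + sharma_mittal 2 3 (meet4 p' q')
              > sharma_mittal 2 3 p' + sharma_mittal 2 3 q')"
proof
  let ?p = "[2/5, 2/5, 1/5, 0::real]" and ?q = "[1/2, 3/10, 1/10, 1/10::real]"
  let ?w = "[1/2, 3/10, 1/5, 0::real]"
  have pp: "prob4 ?p" "prob4 ?q" "prob4 ?w" by (simp_all add: prob4_def)
  have j: "join4 ?p ?q = ?w"
  proof (rule join_eq[OF pp])
    show "majorized ?p ?w" "majorized ?q ?w" by (simp_all add: maj_iff)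
    fix k :: nat assume "k \<in> {1..4}"
    hence "k = 1 \<or> k = 2 \<or> k = 3 \<or> k = 4" by (simp only: k4)
    thus "psum ?w k = max (psum ?p k) (psum ?q k)" by (elim disjE) (simp_all add: psum4 psum4[simplified])
  qed
  show "\<exists>p q. prob4 p \<and> prob4 q \<and>
            sharma_mittal 2 3 (join4 p q) + sharma_mittal 2 3 (meet4 p q)
              < sharma_mittal 2 3 p + sharma_mittal 2 3 q"
    by (rule exI[of _ ?p], rule exI[of _ ?q]) (simp add: pp j meet_eq sm power2_eq_square)
next
  let ?p = "[2/5, 3/10, 3/10, 0::real]" and ?q = "[2/5, 2/5, 1/10, 1/10::real]"
  let ?w = "[2/5, 2/5, 1/5, 0::real]"
  have pp: "prob4 ?p" "prob4 ?q" "prob4 ?w" by (simp_all add: prob4_def)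
  have j: "join4 ?p ?q = ?w"
  proof (rule join_eq[OF pp])
    show "majorized ?p ?w" "majorized ?q ?w" by (simp_all add: maj_iff)
    fix k :: nat assume "k \<in> {1..4}"
    hence "k = 1 \<or> k = 2 \<or> k = 3 \<or> k = 4" by (simp only: k4)
    thus "psum ?w k = max (psum ?p k) (psum ?q k)" by (elim disjE) (simp_all add: psum4 psum4[simplified])
  qed
  show "\<exists>p q. prob4 p \<and> prob4 q \<and>
            sharma_mittal 2 3 (join4 p q) + sharma_mittal 2 3 (meet4 p q)
              > sharma_mittal 2 3 p + sharma_mittal 2 3 q"
    by (rule exI[of _ ?p], rule exI[of _ ?q]) (simp add: pp j meet_eq sm power2_eq_square)
qed

end
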